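(* Let $k$ be a positive integer, let $n$ and $m$ be integers with $0<m\le\binom{n}{2}$, and let $G$ be any ordered graph with vertex set $[n]$ (with the natural order) and exactly $m$ edges. Then \[ N_{\mathrm{ord}}(S_L(k), S_R(n,m)) \le N_{\mathrm{ord}}(S_L(k), G) \le N_{\mathrm{ord}}(S_L(k), S_L(n,m)). \]
   Context: An ordered graph is a graph together with a total order on its vertex set; here vertex sets are $[n]=\{1,\dots,n\}$ with the natural order. For an ordered graph $F$ on $[s]$ and an ordered graph $G$ on $[n]$, $N_{\mathrm{ord}}(F,G)$ is the number of sets $\{v_1,\dots,v_s\}\subseteq[n]$ with $v_1<\dots<v_s$ such that $\{v_i,v_j\}\in E(G)$ whenever $\{i,j\}\in E(F)$. For positive integers $n$ and $m\le\binom{n}{2}$, let $f(n,a)=\binom{a}{2}+a(n-a)$, let $a$ be the largest integer with $f(n,a)\le m$ (so $0\le a\le n$), and let $b=m-f(n,a)$. The ordered graph $S_L(n,m)$ has vertex set $[n]$ and edge set consisting of all pairs $\{v,w\}$ of distinct vertices with $v\in[a]$, $w\in[n]$, together with the edges $\{a+1,j\}$ for $a+2\le j\le a+b+1$; it has exactly $m$ edges. The ordered graph $S_R(n,m)$ is $S_L(n,m)$ with the vertex order reversed (equivalently, the ordered graph on $[n]$ obtained by relabeling each vertex $i$ of $S_L(n,m)$ as $n+1-i$). $S_L(k):=S_L(k+1,k)$ is the ordered star on $[k+1]$ with edges $\{1,j\}$ for $2\le j\le k+1$ (the center is the smallest vertex). Thus $N_{\mathrm{ord}}(S_L(k),G)=\sum_{i\in[n]}\binom{d^+_G(i)}{k}$,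 where $d^+_G(i)=|\{j>i:\{i,j\}\in E(G)\}|$. *)

theory Defs
  imports Main
begin

definition ordered_graph :: "nat \<Rightarrow> nat set set \<Rightarrow> bool" where
  "ordered_graph n E \<longleftrightarrow> (\<forall>e\<in>E. e \<subseteq> {1..n} \<and> card e = 2)"

text \<open>The i-th smallest element of V is  sorted_list_of_set V ! (i - 1).\<close>

definition N_ord :: "nat \<Rightarrow> nat set set \<Rightarrow> nat \<Rightarrow> nat set set \<Rightarrow> nat" where
  "N_ord s F n G = card {V. V \<subseteq> {1..n} \<and> card V = s \<and>
      (\<forall>i j. {i, j} \<in> F \<longrightarrow>
         {sorted_list_of_set V ! (i - 1), sorted_list_of_set V ! (j - 1)} \<in> G)}"

definition f_fun :: "nat \<Rightarrow> nat \<Rightarrow> nat" where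
  "f_fun n a = (a choose 2) + a * (n - a)"

definition a_par :: "nat \<Rightarrow> nat \<Rightarrow> nat" where
  "a_par n m = (GREATEST a. a \<le> n \<and> f_fun n a \<le> m)"

definition b_par :: "nat \<Rightarrow> nat \<Rightarrow> nat" where
  "b_par n m = m - f_fun n (a_par n m)"

definition S_L :: "nat \<Rightarrow> nat \<Rightarrow> nat set set" where
  "S_L n m = (let a = a_par n m; b = b_par n m in
     {{v, w} | v w. v \<in> {1..a} \<and> w \<in> {1..n} \<and> v \<noteq> w}
     \<union> {{a + 1, j} | j. a + 2 \<le> j \<and> j \<le> a + b + 1})"

definition S_R :: "nat \<Rightarrow> nat \<Rightarrow> nat set set" where
  "S_R n m = (\<lambda>e. (\<lambda>i. n + 1 - i) ` e) ` S_L n m"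

text \<open>The ordered star S_L(k) = S_L(k+1,k) on [k+1].\<close>

definition star_L :: "nat \<Rightarrow> nat set set" where
  "star_L k = S_L (k + 1) k"

end

theory Submission
  imports Defs
begin


definition cc :: "nat \<Rightarrow> nat \<Rightarrow> nat" where
  "cc k s = (s choose (k-1)) - (if s = 0 then 0 else ((s-1) choose (k-1)))"

lemma choose_mono_Suc: "(x choose j) \<le> (Suc x choose j)"
  by (cases j) auto

lemma cc_sum: "(\<Sum>s<Suc x. cc k s) = x choose (k-1)"
proof (induction x)
  case 0 then show ?case by (simp add: cc_def)
next
  case (Suc x)
  have "(\<Sum>s<Suc (Suc x). cc k s) = (x choose (k-1)) + cc k (Suc x)"
    using Suc by simp
  also have "\<dots> = Suc x choose (k-1)" using choose_mono_Suc[of x "k-1"] by (simp add: cc_def)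
  finally show ?case .
qed

lemma choose_decomp:
  assumes "k > 0" "x \<le> N"
  shows "x choose k = (\<Sum>s<N. cc k s * (x - s))"
  using assms(2)
proof (induction x)
  case 0 then show ?case using assms(1) by simp
next
  case (Suc x)
  have e: "\<And>s. cc k s * (Suc x - s) = cc k s * (x - s) + (if s \<le> x then cc k s else 0)"
    by (simp add: Suc_diff_le)
  have "(\<Sum>s<N. cc k s * (Suc x - s)) = (\<Sum>s<N. cc k s * (x - s)) + (\<Sum>s<N. if s \<le> x then cc k s else 0)"
    by (simp add: e sum.distrib)
  also have "(\<Sum>s<N. if s \<le> x then cc k s else 0) = (\<Sum>s\<in>{s\<in>{..<N}. s \<le> x}. cc k s)"
    using sum.inter_filter[of "{..<N}" "cc k" "\<lambda>s. s \<le> x"] by simp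
  also have "{s\<in>{..<N}. s \<le> x} = {..<Suc x}" using Suc.prems by auto
  also have "(\<Sum>s<Suc x. cc k s) = x choose (k-1)" by (rule cc_sum)
  finally have "(\<Sum>s<N. cc k s * (Suc x - s)) = (x choose k) + (x choose (k-1))"
    using Suc by simp
  moreover have "Suc x choose k = (x choose (k-1)) + (x choose k)"
    using assms(1) by (cases k) auto
  ultimately show ?case by simp
qed

lemma comp_choose:
  assumes "k > 0" "finite I" "\<And>i. i \<in> I \<Longrightarrow> d1 i \<le> N" "\<And>i. i \<in> I \<Longrightarrow> d2 i \<le> N"
    and "\<And>s. (\<Sum>i\<in>I. d1 i - s) \<le> (\<Sum>i\<in>I. d2 i - s)"
  shows "(\<Sum>i\<in>I. d1 i choose k) \<le> (\<Sum>i\<in>I. d2 i choose k)"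
proof -
  have "(\<Sum>i\<in>I. d1 i choose k) = (\<Sum>i\<in>I. \<Sum>s<N. cc k s * (d1 i - s))"
    using choose_decomp[OF assms(1) assms(3)] by simp
  also have "\<dots> = (\<Sum>s<N. cc k s * (\<Sum>i\<in>I. d1 i - s))"
    by (subst sum.swap) (simp add: sum_distrib_left)
  also have "\<dots> \<le> (\<Sum>s<N. cc k s * (\<Sum>i\<in>I. d2 i - s))"
    by (intro sum_mono mult_left_mono assms(5)) auto
  also have "\<dots> = (\<Sum>i\<in>I. \<Sum>s<N. cc k s * (d2 i - s))"
    by (subst sum.swap) (simp add: sum_distrib_left)
  also have "\<dots> = (\<Sum>i\<in>I. d2 i choose k)"
    using choose_decomp[OF assms(1) assms(4)] by simp
  finally show ?thesis .
qed

lemma f_sum: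
  assumes "a \<le> n"
  shows "(\<Sum>i\<in>{1..a}. n - i) = f_fun n a"
  using assms
proof (induction a)
  case 0 then show ?case by (simp add: f_fun_def)
next
  case (Suc a)
  then obtain t where n: "n = a + 1 + t" by (metis Suc_eq_plus1 le_iff_add)
  have "(\<Sum>i\<in>{1..Suc a}. n - i) = f_fun n a + (n - Suc a)" using Suc by simp
  also have "\<dots> = f_fun n (Suc a)" unfolding f_fun_def n
    by (simp add: algebra_simps numeral_2_eq_2)
  finally show ?case .
qed

lemma sum_plus1: "finite A \<Longrightarrow> (\<Sum>i\<in>A. f i + (1::nat)) = sum f A + card A"
  by (induction A rule: finite_induct) auto

lemma rearr:
  assumes "P \<subseteq> {1..n}"
  shows "(\<Sum>i\<in>P. n - i) \<le> (\<Sum>i\<in>{1..card P}. n - i)"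
  using assms
proof (induction n arbitrary: P)
  case 0 then show ?case by simp
next
  case (Suc n)
  define Q where "Q = P - {Suc n}"
  have Q: "Q \<subseteq> {1..n}" using Suc.prems Q_def by auto
  have fQ: "finite Q" using Q finite_subset by blast
  have cQ: "card Q \<le> card P" unfolding Q_def
    using Suc.prems finite_subset[OF Suc.prems] by (simp add: card_mono)
  have cQn: "card Q \<le> n" using card_mono[OF _ Q] by simp
  have "(\<Sum>i\<in>P. Suc n - i) = (\<Sum>i\<in>Q. Suc n - i)"
    unfolding Q_def by (rule sum.mono_neutral_right) (use Suc.prems finite_subset in auto)
  also have "\<dots> = (\<Sum>i\<in>Q. (n - i) + 1)"
    by (rule sum.cong) (use Q in \<open>auto simp: Suc_diff_le subset_iff\<close>)
  also have "\<dots> = (\<Sum>i\<in>Q. n - i) + card Q" using fQ by (rule sum_plus1)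
  also have "\<dots> \<le> (\<Sum>i\<in>{1..card Q}. n - i) + card Q" using Suc.IH[OF Q] by simp
  also have "\<dots> = (\<Sum>i\<in>{1..card Q}. (n - i) + 1)" using sum_plus1[of "{1..card Q}" "\<lambda>i. n - i"] by simp
  also have "\<dots> = (\<Sum>i\<in>{1..card Q}. Suc n - i)"
    by (rule sum.cong) (use cQn in auto)
  also have "\<dots> \<le> (\<Sum>i\<in>{1..card P}. Suc n - i)"
    by (rule sum_mono2) (use cQ in auto)
  finally show ?case .
qed



lemma upper_seq:
  fixes d D :: "nat \<Rightarrow> nat"
  assumes dle: "\<forall>i\<in>{1..n}. d i \<le> n - i" and dsum: "(\<Sum>i\<in>{1..n}. d i) \<le> m"
    and an: "a \<le> n" and fm: "f_fun n a + b = m"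
    and Dlo: "\<forall>i\<in>{1..a}. n - i \<le> D i" and Dab: "a < n \<longrightarrow> b \<le> D (a+1)"
  shows "(\<Sum>i\<in>{1..n}. d i - s) \<le> (\<Sum>i\<in>{1..n}. D i - s)"
proof -
  define P where "P = {i\<in>{1..n}. s < d i}"
  define p where "p = card P"
  have Psub: "P \<subseteq> {1..n}" unfolding P_def by auto
  have fP: "finite P" using Psub finite_subset by blast
  have pn: "p \<le> n" unfolding p_def using card_mono[OF _ Psub] by simp
  have h1: "(\<Sum>i\<in>{1..n}. d i - s) = (\<Sum>i\<in>P. d i - s)"
    by (rule sum.mono_neutral_right) (auto simp: P_def)
  have h2: "(\<Sum>i\<in>P. d i - s) + p * s = (\<Sum>i\<in>P. d i)"
  proof -
    have "(\<Sum>i\<in>P. d i - s) + p * s = (\<Sum>i\<in>P. (d i - s) + s)"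
      by (simp add: sum.distrib p_def)
    also have "\<dots> = (\<Sum>i\<in>P. d i)" by (rule sum.cong) (auto simp: P_def)
    finally show ?thesis .
  qed
  have h3: "(\<Sum>i\<in>P. d i) \<le> m"
    using sum_mono2[OF _ Psub, of d] dsum by simp
  have h4: "(\<Sum>i\<in>P. d i) \<le> (\<Sum>i\<in>{1..p}. n - i)"
  proof -
    have "(\<Sum>i\<in>P. d i) \<le> (\<Sum>i\<in>P. n - i)" using dle Psub by (intro sum_mono) auto
    also have "\<dots> \<le> (\<Sum>i\<in>{1..p}. n - i)" unfolding p_def by (rule rearr[OF Psub])
    finally show ?thesis .
  qed
  have h5: "(\<Sum>i\<in>P. d i) \<le> (\<Sum>i\<in>{1..p}. D i)"
  proof (cases "p \<le> a")
    case True
    have "(\<Sum>i\<in>{1..p}. n - i) \<le> (\<Sum>i\<in>{1..p}. D i)" using Dlo True by (intro sum_mono) auto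
    then show ?thesis using h4 by linarith
  next
    case False
    have "(\<Sum>i\<in>{1..a}. D i) + D (a+1) = (\<Sum>i\<in>{1..a+1}. D i)" by simp
    also have "\<dots> \<le> (\<Sum>i\<in>{1..p}. D i)" using False by (intro sum_mono2) auto
    finally have A: "(\<Sum>i\<in>{1..a}. D i) + D (a+1) \<le> (\<Sum>i\<in>{1..p}. D i)" .
    have "(\<Sum>i\<in>{1..a}. n - i) \<le> (\<Sum>i\<in>{1..a}. D i)" using Dlo by (intro sum_mono) auto
    moreover have "b \<le> D (a+1)" using Dab False pn by auto
    ultimately have "f_fun n a + b \<le> (\<Sum>i\<in>{1..p}. D i)" using A f_sum[OF an] by linarith
    then show ?thesis using h3 fm by linarith
  qed
  have h6: "(\<Sum>i\<in>{1..p}. D i) \<le> (\<Sum>i\<in>{1..p}. D i - s) + p * s"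
  proof -
    have "(\<Sum>i\<in>{1..p}. D i) \<le> (\<Sum>i\<in>{1..p}. (D i - s) + s)" by (intro sum_mono) auto
    also have "\<dots> = (\<Sum>i\<in>{1..p}. D i - s) + p * s" by (simp add: sum.distrib)
    finally show ?thesis .
  qed
  have h7: "(\<Sum>i\<in>{1..p}. D i - s) \<le> (\<Sum>i\<in>{1..n}. D i - s)"
    using pn by (intro sum_mono2) auto
  show ?thesis using h1 h2 h5 h6 h7 by linarith
qed

lemma lower_seq:
  fixes d E :: "nat \<Rightarrow> nat"
  assumes dle: "\<forall>i\<in>{1..n}. d i \<le> n - i" and dsum: "(\<Sum>i\<in>{1..n}. d i) = m"
    and Elo: "\<forall>i\<in>{1..n}. min (n - i) a \<le> E i" and Ehi: "\<forall>i\<in>{1..n}. E i \<le> n - i"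
    and Ea: "\<forall>i\<in>{1..n}. E i \<le> a + 1" and Esum: "(\<Sum>i\<in>{1..n}. E i) \<le> m"
  shows "(\<Sum>i\<in>{1..n}. E i - s) \<le> (\<Sum>i\<in>{1..n}. d i - s)"
proof (cases "a + 1 \<le> s")
  case True
  then have "(\<Sum>i\<in>{1..n}. E i - s) = 0" using Ea by auto
  then show ?thesis by simp
next
  case False
  have split: "\<And>x::nat. x = (x - s) + min x s" by auto
  have e1: "(\<Sum>i\<in>{1..n}. E i - s) + (\<Sum>i\<in>{1..n}. min (E i) s) = (\<Sum>i\<in>{1..n}. E i)"
    unfolding sum.distrib[symmetric] by (rule sum.cong) auto
  have e2: "(\<Sum>i\<in>{1..n}. d i - s) + (\<Sum>i\<in>{1..n}. min (d i) s) = (\<Sum>i\<in>{1..n}. d i)"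
    unfolding sum.distrib[symmetric] by (rule sum.cong) auto
  have e3: "(\<Sum>i\<in>{1..n}. min (d i) s) \<le> (\<Sum>i\<in>{1..n}. min (E i) s)"
  proof (intro sum_mono)
    fix i assume i: "i \<in> {1..n}"
    have "d i \<le> n - i" using dle i by blast
    then have "min (d i) s \<le> min (n - i) s" by simp
    also have "\<dots> \<le> min (E i) s"
    proof -
      have "min (n - i) a \<le> E i" using Elo i by blast
      then show ?thesis using False by simp
    qed
    finally show "min (d i) s \<le> min (E i) s" .
  qed
  show ?thesis using e1 e2 e3 dsum Esum by linarith
qed



lemma a_star1: "a_par 2 1 = 2"
  unfolding a_par_def
proof (rule Greatest_equality)
  show "2 \<le> (2::nat) \<and> f_fun 2 2 \<le> 1" by (simp add: f_fun_def)
next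
  fix y assume "y \<le> (2::nat) \<and> f_fun 2 y \<le> 1" then show "y \<le> 2" by simp
qed

lemma a_star2:
  assumes "k \<ge> 2"
  shows "a_par (k+1) k = 1"
  unfolding a_par_def
proof (rule Greatest_equality)
  show "1 \<le> k + 1 \<and> f_fun (k+1) 1 \<le> k" by (simp add: f_fun_def)
next
  fix y assume y: "y \<le> k + 1 \<and> f_fun (k+1) y \<le> k"
  show "y \<le> 1"
  proof (rule ccontr)
    assume "\<not> y \<le> 1"
    then have "{1..2} \<subseteq> {1..y}" by auto
    then have "(\<Sum>i\<in>{1..2}. k + 1 - i) \<le> (\<Sum>i\<in>{1..y}. k + 1 - i)"
      by (intro sum_mono2) auto
    also have "\<dots> = f_fun (k+1) y" using y f_sum by blast
    finally have "(\<Sum>i\<in>{1..2::nat}. k + 1 - i) \<le> k" using y by linarith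
    moreover have "(\<Sum>i\<in>{1..2::nat}. k + 1 - i) = k + (k - 1)"
      by (simp add: numeral_2_eq_2)
    ultimately show False using assms by linarith
  qed
qed

lemma star_L_eq:
  assumes "k > 0"
  shows "star_L k = {{1, w} | w. 2 \<le> w \<and> w \<le> k + 1}"
proof (cases "k = 1")
  case True
  have b: "b_par 2 1 = 0" unfolding b_par_def a_star1 by (simp add: f_fun_def)
  have e: "star_L 1 = S_L 2 1" unfolding star_L_def one_add_one ..
  show ?thesis unfolding True e S_L_def Let_def a_star1 b
    by (auto simp: doubleton_eq_iff numeral_2_eq_2 le_Suc_eq insert_commute)
next
  case False
  then have k2: "k \<ge> 2" using assms by simp
  have b: "b_par (k+1) k = 0" unfolding b_par_def a_star2[OF k2] by (simp add: f_fun_def)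
  show ?thesis unfolding star_L_def S_L_def Let_def a_star2[OF k2] b
    by (auto simp: doubleton_eq_iff insert_commute)
qed



definition dp :: "nat set set \<Rightarrow> nat \<Rightarrow> nat \<Rightarrow> nat" where
  "dp G n i = card {j. i < j \<and> j \<le> n \<and> {i, j} \<in> G}"

lemma cond_iff:
  assumes k: "k > 0" and fV: "finite V" and cV: "card V = k + 1"
  shows "(\<forall>i j. {i, j} \<in> star_L k \<longrightarrow>
           {sorted_list_of_set V ! (i - 1), sorted_list_of_set V ! (j - 1)} \<in> G)
         \<longleftrightarrow> (\<forall>w\<in>V - {Min V}. {Min V, w} \<in> G)"
proof -
  have ne: "V \<noteq> {}" using cV by auto
  define L' where "L' = sorted_list_of_set (V - {Min V})"
  have L: "sorted_list_of_set V = Min V # L'"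
    unfolding L'_def by (rule sorted_list_of_set_nonempty[OF fV ne])
  have MV: "Min V \<in> V" using fV ne by simp
  have lenL': "length L' = k" unfolding L'_def using fV cV MV by simp
  have setL': "set L' = V - {Min V}" unfolding L'_def using fV by simp
  have st: "\<And>i j. {i, j} \<in> star_L k \<longleftrightarrow> (\<exists>w. 2 \<le> w \<and> w \<le> k + 1 \<and> {i, j} = {1, w})"
    using star_L_eq[OF k] by auto
  show ?thesis
  proof
    assume H: "\<forall>i j. {i, j} \<in> star_L k \<longrightarrow>
           {sorted_list_of_set V ! (i - 1), sorted_list_of_set V ! (j - 1)} \<in> G"
    show "\<forall>w\<in>V - {Min V}. {Min V, w} \<in> G"
    proof
      fix w assume "w \<in> V - {Min V}"
      then have "w \<in> set L'" using setL' by simp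
      then obtain u where u: "u < k" "L' ! u = w" using lenL' by (auto simp: in_set_conv_nth)
      have "{1, u + 2} \<in> star_L k" unfolding st using u by (intro exI[of _ "u+2"]) auto
      then have "{sorted_list_of_set V ! (1 - 1), sorted_list_of_set V ! (u + 2 - 1)} \<in> G"
        using H by blast
      then show "{Min V, w} \<in> G" using u L by simp
    qed
  next
    assume H: "\<forall>w\<in>V - {Min V}. {Min V, w} \<in> G"
    show "\<forall>i j. {i, j} \<in> star_L k \<longrightarrow>
           {sorted_list_of_set V ! (i - 1), sorted_list_of_set V ! (j - 1)} \<in> G"
    proof (intro allI impI)
      fix i j assume "{i, j} \<in> star_L k"
      then obtain w where w: "2 \<le> w" "w \<le> k + 1" "{i, j} = {1, w}" using st by blast
      have lw: "sorted_list_of_set V ! (w - 1) = L' ! (w - 2)"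
        using w L by (cases w) (auto simp: numeral_2_eq_2)
      have "L' ! (w - 2) \<in> set L'" using w lenL' by (intro nth_mem) auto
      then have g: "{Min V, sorted_list_of_set V ! (w - 1)} \<in> G" using H setL' lw by simp
      have l0: "sorted_list_of_set V ! (1 - 1) = Min V" using L by simp
      from w(3) have "(i = 1 \<and> j = w) \<or> (i = w \<and> j = 1)" by (auto simp: doubleton_eq_iff)
      then show "{sorted_list_of_set V ! (i - 1), sorted_list_of_set V ! (j - 1)} \<in> G"
        using g l0 by (auto simp: insert_commute)
    qed
  qed
qed

lemma N_formula:
  assumes k: "k > 0"
  shows "N_ord (k + 1) (star_L k) n G = (\<Sum>i\<in>{1..n}. dp G n i choose k)"
proof -
  define Nb where "Nb i = {j. i < j \<and> j \<le> n \<and> {i, j} \<in> G}" for i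
  define S where "S i = insert i ` {W. W \<subseteq> Nb i \<and> card W = k}" for i
  have fNb: "finite (Nb i)" for i unfolding Nb_def by (rule finite_subset[of _ "{..n}"]) auto
  have seteq: "{V. V \<subseteq> {1..n} \<and> card V = k + 1 \<and>
      (\<forall>i j. {i, j} \<in> star_L k \<longrightarrow>
         {sorted_list_of_set V ! (i - 1), sorted_list_of_set V ! (j - 1)} \<in> G)}
      = (\<Union>i\<in>{1..n}. S i)"
  proof (intro equalityI subsetI)
    fix V assume "V \<in> {V. V \<subseteq> {1..n} \<and> card V = k + 1 \<and>
      (\<forall>i j. {i, j} \<in> star_L k \<longrightarrow>
         {sorted_list_of_set V ! (i - 1), sorted_list_of_set V ! (j - 1)} \<in> G)}"
    then have V: "V \<subseteq> {1..n}" "card V = k + 1" and c: "\<forall>i j. {i, j} \<in> star_L k \<longrightarrow>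
         {sorted_list_of_set V ! (i - 1), sorted_list_of_set V ! (j - 1)} \<in> G" by auto
    have fV: "finite V" using V(1) finite_subset by blast
    have ne: "V \<noteq> {}" using V(2) by auto
    have c2: "\<forall>w\<in>V - {Min V}. {Min V, w} \<in> G" using cond_iff[OF k fV V(2)] c by blast
    have MV: "Min V \<in> V" using fV ne by simp
    have "V - {Min V} \<subseteq> Nb (Min V)"
    proof
      fix w assume w: "w \<in> V - {Min V}"
      have "Min V \<le> w" using w fV by simp
      then show "w \<in> Nb (Min V)" using w c2 V(1) unfolding Nb_def by auto
    qed
    moreover have "card (V - {Min V}) = k" using V(2) MV fV by simp
    moreover have "V = insert (Min V) (V - {Min V})" using MV by auto
    ultimately have "V \<in> S (Min V)" unfolding S_def by blast
    then show "V \<in> (\<Union>i\<in>{1..n}. S i)" using MV V(1) by blast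
  next
    fix V assume "V \<in> (\<Union>i\<in>{1..n}. S i)"
    then obtain i W where i: "i \<in> {1..n}" and W: "W \<subseteq> Nb i" "card W = k" and V: "V = insert i W"
      unfolding S_def by blast
    have fW: "finite W" using W(1) fNb finite_subset by blast
    have iW: "i \<notin> W" using W(1) unfolding Nb_def by auto
    have Vsub: "V \<subseteq> {1..n}" using i W(1) V unfolding Nb_def by auto
    have cV: "card V = k + 1" using V fW iW W(2) by simp
    have fV: "finite V" using V fW by simp
    have MinV: "Min V = i"
      using V W(1) fW unfolding Nb_def by (intro Min_eqI) auto
    have "\<forall>w\<in>V - {Min V}. {Min V, w} \<in> G" using MinV V W(1) unfolding Nb_def by auto
    then show "V \<in> {V. V \<subseteq> {1..n} \<and> card V = k + 1 \<and>
      (\<forall>i j. {i, j} \<in> star_L k \<longrightarrow>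
         {sorted_list_of_set V ! (i - 1), sorted_list_of_set V ! (j - 1)} \<in> G)}"
      using cond_iff[OF k fV cV] Vsub cV by blast
  qed
  have cardS: "card (S i) = dp G n i choose k" for i
  proof -
    have "inj_on (insert i) {W. W \<subseteq> Nb i \<and> card W = k}"
      unfolding Nb_def by (rule inj_onI) (auto simp: insert_ident)
    then have "card (S i) = card {W. W \<subseteq> Nb i \<and> card W = k}" unfolding S_def by (rule card_image)
    also have "\<dots> = card (Nb i) choose k" by (rule n_subsets[OF fNb])
    finally show ?thesis unfolding dp_def Nb_def .
  qed
  have fS: "finite (S i)" for i unfolding S_def using fNb by simp
  have disj: "\<forall>i\<in>{1..n}. \<forall>j\<in>{1..n}. i \<noteq> j \<longrightarrow> S i \<inter> S j = {}"
  proof (intro ballI impI)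
    fix i j :: nat assume ij: "i \<noteq> j"
    show "S i \<inter> S j = {}"
    proof (rule ccontr)
      assume "S i \<inter> S j \<noteq> {}"
      then obtain W W' where W: "W \<subseteq> Nb i" "W' \<subseteq> Nb j" "insert i W = insert j W'"
        unfolding S_def by blast
      have "i \<in> insert j W'" using W(3) by blast
      then have "j < i" using ij W(2) unfolding Nb_def by auto
      moreover have "j \<in> insert i W" using W(3) by blast
      then have "i < j" using ij W(1) unfolding Nb_def by auto
      ultimately show False by simp
    qed
  qed
  show ?thesis unfolding N_ord_def seteq
    by (subst card_UN_disjoint) (use fS disj cardS in auto)
qed



lemma dp_le: "dp G n i \<le> n - i"
proof -
  have "{j. i < j \<and> j \<le> n \<and> {i, j} \<in> G} \<subseteq> {i+1..n}" by auto
  then have "dp G n i \<le> card {i+1..n}" unfolding dp_def by (intro card_mono) auto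
  then show ?thesis by simp
qed

lemma sum_dp:
  assumes og: "ordered_graph n G"
  shows "(\<Sum>i\<in>{1..n}. dp G n i) = card G"
proof -
  define Nb where "Nb i = {j. i < j \<and> j \<le> n \<and> {i, j} \<in> G}" for i
  have fNb: "finite (Nb i)" for i unfolding Nb_def by (rule finite_subset[of _ "{..n}"]) auto
  have "(\<Sum>i\<in>{1..n}. dp G n i) = card (SIGMA i:{1..n}. Nb i)"
    using fNb by (simp add: dp_def Nb_def)
  also have "\<dots> = card G"
  proof (rule bij_betw_same_card)
    show "bij_betw (\<lambda>(i, j). {i, j}) (SIGMA i:{1..n}. Nb i) G"
      unfolding bij_betw_def
    proof
      show "inj_on (\<lambda>(i, j). {i, j}) (SIGMA i:{1..n}. Nb i)"
        by (rule inj_onI) (auto simp: Nb_def doubleton_eq_iff)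
      show "(\<lambda>(i, j). {i, j}) ` (SIGMA i:{1..n}. Nb i) = G"
      proof (intro equalityI subsetI)
        fix e assume "e \<in> (\<lambda>(i, j). {i, j}) ` (SIGMA i:{1..n}. Nb i)"
        then show "e \<in> G" by (auto simp: Nb_def)
      next
        fix e assume e: "e \<in> G"
        then have es: "e \<subseteq> {1..n}" "card e = 2" using og unfolding ordered_graph_def by auto
        then obtain x y where xy: "e = {x, y}" "x \<noteq> y" by (auto simp: card_2_iff)
        show "e \<in> (\<lambda>(i, j). {i, j}) ` (SIGMA i:{1..n}. Nb i)"
        proof (cases "x < y")
          case True
          then have "(x, y) \<in> (SIGMA i:{1..n}. Nb i)" using es xy e by (auto simp: Nb_def)
          then show ?thesis using xy by force
        next
          case False
          then have "y < x" using xy by simp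
          then have "(y, x) \<in> (SIGMA i:{1..n}. Nb i)" using es xy e
            by (auto simp: Nb_def insert_commute)
          then show ?thesis using xy by (force simp: insert_commute)
        qed
      qed
    qed
  qed
  finally show ?thesis .
qed

lemma a_facts:
  assumes "m \<le> n choose 2"
  shows "a_par n m \<le> n \<and> f_fun n (a_par n m) \<le> m \<and> (a_par n m < n \<longrightarrow> m < f_fun n (a_par n m + 1))"
proof -
  let ?P = "\<lambda>a. a \<le> n \<and> f_fun n a \<le> m"
  have P0: "?P 0" by (simp add: f_fun_def numeral_2_eq_2)
  have bd: "\<And>y. ?P y \<Longrightarrow> y \<le> n" by simp
  have Pa: "?P (a_par n m)" unfolding a_par_def by (rule GreatestI_nat[where P="?P" and k=0 and b=n, OF P0 bd])
  have "m < f_fun n (a_par n m + 1)" if "a_par n m < n"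
  proof (rule ccontr)
    assume "\<not> m < f_fun n (a_par n m + 1)"
    then have "?P (a_par n m + 1)" using that by simp
    then have "a_par n m + 1 \<le> a_par n m" unfolding a_par_def by (rule Greatest_le_nat[where P="?P" and b=n, OF _ bd])
    then show False by simp
  qed
  then show ?thesis using Pa by blast
qed

lemma b_facts:
  assumes "m \<le> n choose 2"
  shows "f_fun n (a_par n m) + b_par n m = m"
    and "a_par n m < n \<Longrightarrow> a_par n m + b_par n m + 1 < n"
    and "a_par n m = n \<Longrightarrow> b_par n m = 0"
proof -
  note A = a_facts[OF assms]
  show "f_fun n (a_par n m) + b_par n m = m" using A unfolding b_par_def by simp
  show "a_par n m + b_par n m + 1 < n" if "a_par n m < n"
  proof -
    have "f_fun n (a_par n m + 1) = f_fun n (a_par n m) + (n - (a_par n m + 1))"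
      using f_sum[of "a_par n m + 1" n] f_sum[of "a_par n m" n] that by simp
    then show ?thesis using A that unfolding b_par_def by linarith
  qed
  show "b_par n m = 0" if "a_par n m = n"
    using assms that unfolding b_par_def f_fun_def by simp
qed

lemma SL_mem:
  "e \<in> S_L n m \<longleftrightarrow>
     (\<exists>v w. e = {v, w} \<and> v \<in> {1..a_par n m} \<and> w \<in> {1..n} \<and> v \<noteq> w) \<or>
     (\<exists>j. e = {a_par n m + 1, j} \<and> a_par n m + 2 \<le> j \<and> j \<le> a_par n m + b_par n m + 1)"
  unfolding S_L_def Let_def by blast



lemma SL_og:
  assumes "m \<le> n choose 2"
  shows "ordered_graph n (S_L n m)"
  unfolding ordered_graph_def
proof
  fix e assume "e \<in> S_L n m"
  then consider (A) v w where "e = {v, w}" "v \<in> {1..a_par n m}" "w \<in> {1..n}" "v \<noteq> w"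
    | (B) j where "e = {a_par n m + 1, j}" "a_par n m + 2 \<le> j" "j \<le> a_par n m + b_par n m + 1"
    unfolding SL_mem by blast
  then show "e \<subseteq> {1..n} \<and> card e = 2"
  proof cases
    case A then show ?thesis using a_facts[OF assms] by auto
  next
    case B
    have "a_par n m < n"
    proof (rule ccontr)
      assume "\<not> a_par n m < n"
      then have "a_par n m = n" using a_facts[OF assms] by simp
      then show False using B b_facts(3)[OF assms] by simp
    qed
    then show ?thesis using B b_facts(2)[OF assms] by auto
  qed
qed

lemma SL_lo1:
  assumes "m \<le> n choose 2" "i \<in> {1..a_par n m}"
  shows "n - i \<le> dp (S_L n m) n i"
proof -
  have "{i+1..n} \<subseteq> {j. i < j \<and> j \<le> n \<and> {i, j} \<in> S_L n m}"
  proof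
    fix j assume j: "j \<in> {i+1..n}"
    have "{i, j} \<in> S_L n m" unfolding SL_mem
      using assms(2) j by (intro disjI1 exI[of _ i] exI[of _ j]) auto
    then show "j \<in> {j. i < j \<and> j \<le> n \<and> {i, j} \<in> S_L n m}" using j by auto
  qed
  then have "card {i+1..n} \<le> dp (S_L n m) n i" unfolding dp_def
    by (intro card_mono) (auto intro: finite_subset[of _ "{..n}"])
  then show ?thesis by simp
qed

lemma SL_lo2:
  assumes "m \<le> n choose 2" "a_par n m < n"
  shows "b_par n m \<le> dp (S_L n m) n (a_par n m + 1)"
proof -
  let ?a = "a_par n m" and ?b = "b_par n m"
  have "{?a+2..?a+?b+1} \<subseteq> {j. ?a + 1 < j \<and> j \<le> n \<and> {?a + 1, j} \<in> S_L n m}"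
    using b_facts(2)[OF assms] unfolding SL_mem by auto
  then have "card {?a+2..?a+?b+1} \<le> dp (S_L n m) n (?a + 1)" unfolding dp_def
    by (intro card_mono) (auto intro: finite_subset[of _ "{..n}"])
  then show ?thesis by simp
qed

lemma SL_card:
  assumes "m \<le> n choose 2"
  shows "card (S_L n m) \<le> m"
proof -
  let ?a = "a_par n m" and ?b = "b_par n m"
  define U where "U i = (if i \<le> ?a then n - i else 0) + (if i = ?a + 1 then ?b else 0)" for i
  have ub: "dp (S_L n m) n i \<le> U i" for i
  proof (cases "i \<le> ?a")
    case True then show ?thesis using dp_le[of "S_L n m" n i] unfolding U_def by simp
  next
    case False
    have "{j. i < j \<and> j \<le> n \<and> {i, j} \<in> S_L n m} \<subseteq> (if i = ?a + 1 then {?a+2..?a+?b+1} else {})"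
      using False unfolding SL_mem by (auto simp: doubleton_eq_iff)
    then have "dp (S_L n m) n i \<le> card (if i = ?a + 1 then {?a+2..?a+?b+1} else {})"
      unfolding dp_def by (intro card_mono) auto
    then show ?thesis using False unfolding U_def by (auto split: if_splits)
  qed
  have "card (S_L n m) = (\<Sum>i\<in>{1..n}. dp (S_L n m) n i)" using sum_dp[OF SL_og[OF assms]] by simp
  also have "\<dots> \<le> (\<Sum>i\<in>{1..n}. U i)" by (intro sum_mono ub)
  also have "\<dots> = (\<Sum>i\<in>{1..n}. if i \<le> ?a then n - i else 0) + (\<Sum>i\<in>{1..n}. if i = ?a + 1 then ?b else 0)"
    unfolding U_def by (simp add: sum.distrib)
  also have "(\<Sum>i\<in>{1..n}. if i \<le> ?a then n - i else 0) = (\<Sum>i\<in>{i\<in>{1..n}. i \<le> ?a}. n - i)"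
    using sum.inter_filter[of "{1..n}" "\<lambda>i. n - i" "\<lambda>i. i \<le> ?a"] by simp
  also have "{i\<in>{1..n}. i \<le> ?a} = {1..?a}" using a_facts[OF assms] by auto
  also have "(\<Sum>i\<in>{1..?a}. n - i) = f_fun n ?a" using f_sum a_facts[OF assms] by blast
  also have "(\<Sum>i\<in>{1..n}. if i = ?a + 1 then ?b else 0) \<le> ?b"
    by (simp add: sum.delta')
  finally show ?thesis using b_facts(1)[OF assms] by linarith
qed

definition rf :: "nat \<Rightarrow> nat \<Rightarrow> nat" where "rf n i = n + 1 - i"

lemma SR_eq: "S_R n m = (\<lambda>e. rf n ` e) ` S_L n m"
  unfolding S_R_def rf_def ..

lemma rf_inv: "i \<in> {1..n} \<Longrightarrow> rf n (rf n i) = i"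
  unfolding rf_def by auto

lemma SR_og:
  assumes "m \<le> n choose 2"
  shows "ordered_graph n (S_R n m)"
  unfolding ordered_graph_def SR_eq
proof
  fix e' assume "e' \<in> (\<lambda>e. rf n ` e) ` S_L n m"
  then obtain e where e: "e \<in> S_L n m" "e' = rf n ` e" by blast
  have es: "e \<subseteq> {1..n}" "card e = 2" using SL_og[OF assms] e(1) unfolding ordered_graph_def by auto
  have inj: "inj_on (rf n) e"
  proof (rule inj_onI)
    fix x y assume xy: "x \<in> e" "y \<in> e" "rf n x = rf n y"
    have "x = rf n (rf n x)" using xy(1) es(1) rf_inv by (metis subsetD)
    also have "\<dots> = rf n (rf n y)" using xy(3) by simp
    also have "\<dots> = y" using xy(2) es(1) rf_inv by (metis subsetD)
    finally show "x = y" .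
  qed
  have "card e' = 2" using card_image[OF inj] e(2) es(2) by simp
  moreover have "e' \<subseteq> {1..n}"
  proof
    fix y assume "y \<in> e'"
    then obtain z where z: "z \<in> e" "y = rf n z" using e(2) by blast
    have "z \<in> {1..n}" using z(1) es(1) by blast
    then show "y \<in> {1..n}" using z(2) unfolding rf_def by auto
  qed
  ultimately show "e' \<subseteq> {1..n} \<and> card e' = 2" by simp
qed

lemma SR_card:
  assumes "m \<le> n choose 2"
  shows "card (S_R n m) \<le> m"
proof -
  have sub: "S_L n m \<subseteq> Pow {1..n}"
    using SL_og[OF assms] unfolding ordered_graph_def by blast
  have "finite (Pow {1..n::nat})" by simp
  then have "finite (S_L n m)" using sub finite_subset by blast
  then have "card (S_R n m) \<le> card (S_L n m)" unfolding SR_eq by (rule card_image_le)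
  then show ?thesis using SL_card[OF assms] by simp
qed

lemma SL_small:
  assumes "m \<le> n choose 2" "e \<in> S_L n m"
  shows "\<exists>z\<in>e. 1 \<le> z \<and> z \<le> a_par n m + 1"
proof -
  from assms(2) consider (A) v w where "e = {v, w}" "v \<in> {1..a_par n m}"
    | (B) j where "e = {a_par n m + 1, j}"
    unfolding SL_mem by blast
  then show ?thesis
  proof cases
    case A then show ?thesis by (intro bexI[of _ v]) auto
  next
    case B then show ?thesis by (intro bexI[of _ "a_par n m + 1"]) auto
  qed
qed

lemma SR_hi:
  assumes "m \<le> n choose 2"
  shows "dp (S_R n m) n x \<le> a_par n m + 1"
proof -
  let ?a = "a_par n m"
  have "{j. x < j \<and> j \<le> n \<and> {x, j} \<in> S_R n m} \<subseteq> {n - ?a..n}"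
  proof
    fix y assume y: "y \<in> {j. x < j \<and> j \<le> n \<and> {x, j} \<in> S_R n m}"
    then obtain e where e: "e \<in> S_L n m" "{x, y} = rf n ` e" unfolding SR_eq by auto
    obtain z where z: "z \<in> e" "1 \<le> z" "z \<le> ?a + 1" using SL_small[OF assms e(1)] by blast
    have "rf n z \<in> {x, y}" using e(2) z(1) by blast
    then have "rf n z \<le> y" using y by auto
    then show "y \<in> {n - ?a..n}" using y z unfolding rf_def by auto
  qed
  then have "dp (S_R n m) n x \<le> card {n - ?a..n}" unfolding dp_def by (intro card_mono) auto
  then show ?thesis using a_facts[OF assms] by simp
qed

lemma SR_lo:
  assumes "m \<le> n choose 2" "x \<in> {1..n}"
  shows "min (n - x) (a_par n m) \<le> dp (S_R n m) n x"
proof -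
  let ?a = "a_par n m"
  have an: "?a \<le> n" using a_facts[OF assms(1)] by simp
  have "{max (x+1) (n+1-?a)..n} \<subseteq> {j. x < j \<and> j \<le> n \<and> {x, j} \<in> S_R n m}"
  proof
    fix y assume y: "y \<in> {max (x+1) (n+1-?a)..n}"
    have "{rf n y, rf n x} \<in> S_L n m" unfolding SL_mem
      using y assms(2) an by (intro disjI1 exI[of _ "rf n y"] exI[of _ "rf n x"]) (auto simp: rf_def)
    moreover have "rf n ` {rf n y, rf n x} = {x, y}" using y assms(2) by (auto simp: rf_inv)
    ultimately have "{x, y} \<in> S_R n m" unfolding SR_eq by (metis image_eqI)
    then show "y \<in> {j. x < j \<and> j \<le> n \<and> {x, j} \<in> S_R n m}" using y by auto
  qed
  then have "card {max (x+1) (n+1-?a)..n} \<le> dp (S_R n m) n x" unfolding dp_def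
    by (intro card_mono) (auto intro: finite_subset[of _ "{..n}"])
  moreover have "card {max (x+1) (n+1-?a)..n} = min (n - x) ?a" using an assms(2) by auto
  ultimately show ?thesis by simp
qed

theorem theorem2:
  fixes k n m :: nat and G :: "nat set set"
  assumes "k > 0" and "0 < m" and "m \<le> n choose 2"
    and "ordered_graph n G" and "card G = m"
  shows "N_ord (k + 1) (star_L k) n (S_R n m) \<le> N_ord (k + 1) (star_L k) n G
       \<and> N_ord (k + 1) (star_L k) n G \<le> N_ord (k + 1) (star_L k) n (S_L n m)"
proof
  note A = a_facts[OF assms(3)]
  have dsum: "(\<Sum>i\<in>{1..n}. dp G n i) = m" using sum_dp[OF assms(4)] assms(5) by simp
  have dle: "\<forall>i\<in>{1..n}. dp G n i \<le> n - i" using dp_le by blast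
  show "N_ord (k + 1) (star_L k) n (S_R n m) \<le> N_ord (k + 1) (star_L k) n G"
    unfolding N_formula[OF assms(1)]
  proof (rule comp_choose[OF assms(1), where N = n])
    fix s
    show "(\<Sum>i\<in>{1..n}. dp (S_R n m) n i - s) \<le> (\<Sum>i\<in>{1..n}. dp G n i - s)"
    proof (rule lower_seq[where a = "a_par n m" and m = m])
      show "\<forall>i\<in>{1..n}. dp G n i \<le> n - i" by (rule dle)
      show "(\<Sum>i\<in>{1..n}. dp G n i) = m" by (rule dsum)
      show "\<forall>i\<in>{1..n}. min (n - i) (a_par n m) \<le> dp (S_R n m) n i"
        using SR_lo[OF assms(3)] by blast
      show "\<forall>i\<in>{1..n}. dp (S_R n m) n i \<le> n - i" using dp_le by blast
      show "\<forall>i\<in>{1..n}. dp (S_R n m) n i \<le> a_par n m + 1" using SR_hi[OF assms(3)] by blast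
      show "(\<Sum>i\<in>{1..n}. dp (S_R n m) n i) \<le> m"
        using sum_dp[OF SR_og[OF assms(3)]] SR_card[OF assms(3)] by simp
    qed
  qed (auto intro: order_trans[OF dp_le])
  show "N_ord (k + 1) (star_L k) n G \<le> N_ord (k + 1) (star_L k) n (S_L n m)"
    unfolding N_formula[OF assms(1)]
  proof (rule comp_choose[OF assms(1), where N = n])
    fix s
    show "(\<Sum>i\<in>{1..n}. dp G n i - s) \<le> (\<Sum>i\<in>{1..n}. dp (S_L n m) n i - s)"
    proof (rule upper_seq[where a = "a_par n m" and m = m and b = "b_par n m"])
      show "\<forall>i\<in>{1..n}. dp G n i \<le> n - i" by (rule dle)
      show "(\<Sum>i\<in>{1..n}. dp G n i) \<le> m" using dsum by simp
      show "a_par n m \<le> n" using A by simp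
      show "f_fun n (a_par n m) + b_par n m = m" by (rule b_facts(1)[OF assms(3)])
      show "\<forall>i\<in>{1..a_par n m}. n - i \<le> dp (S_L n m) n i" using SL_lo1[OF assms(3)] by blast
      show "a_par n m < n \<longrightarrow> b_par n m \<le> dp (S_L n m) n (a_par n m + 1)"
        using SL_lo2[OF assms(3)] by blast
    qed
  qed (auto intro: order_trans[OF dp_le])
qed

end
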